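(* Let $m>n>0$ and $c>0$ be constants. Let $f,g\in C(\mathbb{R}_0^+,\mathbb{R}_0^+)$, let $w\in C(\mathbb{R}_0^+,\mathbb{R}_0^+)$ be nondecreasing with $w(x)>0$ for $x>0$, and let $\alpha\in C^1(\mathbb{R}_0^+,\mathbb{R}_0^+)$ be nondecreasing with $\alpha(t)\le t$. Suppose $u\in C(\mathbb{R}_0^+,\mathbb{R}_0^+)$ satisfies, for all $t\ge0$, $$u^m(t)\le c^{m/(m-n)}+\frac{m}{m-n}\Big(\int_0^{\alpha(t)}f(s)u^n(s)w(u(s))\,ds+\int_0^t g(s)u^n(s)w(u(s))\,ds\Big).$$ Let $\Psi(x)=\int_1^x\frac{ds}{w(s^{1/(m-n)})}$ for $x>0$, and let $\tau>0$ be such that for all $t\in[0,\tau]$, $$\Psi(c)+\int_0^{\alpha(t)}f(s)\,ds+\int_0^{t}g(s)\,ds\in\mathrm{Dom}(\Psi^{-1}).$$ Then for all $t\in[0,\tau]$, $$u(t)\le\Big\{\Psi^{-1}\Big[\Psi(c)+\int_0^{\alpha(t)}f(s)\,ds+\int_0^{t}g(s)\,ds\Big]\Big\}^{1/(m-n)}.$$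
   Context: $\mathbb{R}_0^+=[0,\infty)$. $\Psi$ is strictly increasing on $(0,\infty)$, $\Psi^{-1}$ denotes its inverse, and $\mathrm{Dom}(\Psi^{-1})=\Psi((0,\infty))$. *)

theory Defs
  imports "HOL-Analysis.Analysis"
begin

definition oint :: "real \<Rightarrow> real \<Rightarrow> (real \<Rightarrow> real) \<Rightarrow> real" where
  "oint a b h = (if a \<le> b then integral {a..b} h else - integral {b..a} h)"

definition Psi :: "real \<Rightarrow> real \<Rightarrow> (real \<Rightarrow> real) \<Rightarrow> real \<Rightarrow> real" where
  "Psi m n w x = oint 1 x (\<lambda>s. 1 / w (s powr (1 / (m - n))))"

text \<open>Psi^{-1}, the inverse of Psi restricted to (0,inf); its domain is Psi ` {0<..}.\<close>
definition Psi_inv :: "real \<Rightarrow> real \<Rightarrow> (real \<Rightarrow> real) \<Rightarrow> real \<Rightarrow> real" where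
  "Psi_inv m n w = the_inv_into {0<..} (Psi m n w)"

end

theory Submission
  imports Defs
begin

lemma anti_exists:
  fixes p :: "real \<Rightarrow> real"
  assumes cp: "continuous_on {0..} p"
  shows "\<exists>P. (\<forall>y\<ge>0. P y = integral {0..y} p) \<and> (\<forall>y\<ge>0. (P has_real_derivative p y) (at y))"
proof -
  define q where "q = (\<lambda>s. p (max 0 s))"
  have cq: "continuous_on UNIV q"
    unfolding q_def
    by (rule continuous_on_compose2[OF cp]) (auto intro!: continuous_intros)
  define P where "P = (\<lambda>y. integral {-1..y} q - integral {-1..0} q)"
  have "P y = integral {0..y} p" if "y \<ge> 0" for y
  proof -
    have "integral {-1..0} q + integral {0..y} q = integral {-1..y} q"
      using that by (intro Henstock_Kurzweil_Integration.integral_combine) (auto intro!: integrable_continuous_interval continuous_on_subset[OF cq])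
    moreover have "integral {0..y} q = integral {0..y} p"
      by (rule integral_cong) (auto simp: q_def)
    ultimately show ?thesis unfolding P_def by simp
  qed
  moreover have "(P has_real_derivative p y) (at y)" if "y \<ge> 0" for y
  proof -
    have "((\<lambda>x. integral {-1..x} q) has_real_derivative q y) (at y within {-1..y+1})"
      using that by (intro integral_has_real_derivative continuous_on_subset[OF cq]) auto
    moreover have "at y within {-1..y+1} = at y"
      using that by (intro at_within_interior) auto
    ultimately have "((\<lambda>x. integral {-1..x} q) has_real_derivative q y) (at y)" by simp
    then have "(P has_real_derivative q y - 0) (at y)"
      unfolding P_def by (intro DERIV_diff DERIV_const)
    then show ?thesis using that by (simp add: q_def)
  qed
  ultimately show ?thesis by blast
qed

lemma mono_deriv_nonneg:
  fixes a :: "real \<Rightarrow> real"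
  assumes "mono_on {0..} a" "t > 0" "(a has_real_derivative d) (at t)"
  shows "d \<ge> 0"
proof (rule ccontr)
  assume "\<not> d \<ge> 0"
  then obtain e where e: "e > 0" "\<forall>h>0. h < e \<longrightarrow> a t > a (t + h)"
    using DERIV_neg_dec_right[OF assms(3)] by force
  then have "a t > a (t + e/2)" by auto
  moreover have "a t \<le> a (t + e/2)"
    using assms(1,2) e(1) by (intro mono_onD[OF assms(1)]) auto
  ultimately show False by simp
qed

lemma Psi_deriv:
  fixes m n :: real and w :: "real \<Rightarrow> real"
  assumes mn: "m > n" and wc: "continuous_on {0..} w" and wp: "\<forall>x>0. w x > 0" and x: "x > 0"
  shows "(Psi m n w has_real_derivative 1 / w (x powr (1 / (m - n)))) (at x)"
proof -
  define h where "h = (\<lambda>s. 1 / w (s powr (1 / (m - n))))"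
  define e where "e = min 1 x / 2"
  have e: "e > 0" "e < 1" "e < x" using x by (auto simp: e_def)
  have ch: "continuous_on {a..b} h" if "a > 0" for a b
  proof -
    have "continuous_on {a..b} (\<lambda>s. s powr (1 / (m - n)))"
      using that by (intro continuous_intros) auto
    then have "continuous_on {a..b} (\<lambda>s. w (s powr (1 / (m - n))))"
      by (rule continuous_on_compose2[OF wc]) auto
    moreover have "\<forall>s\<in>{a..b}. w (s powr (1 / (m - n))) \<noteq> 0"
      using that wp by (auto intro!: less_imp_neq[symmetric])
    ultimately show ?thesis unfolding h_def by (intro continuous_intros) auto
  qed
  have eq: "Psi m n w y = integral {e..y} h - integral {e..1} h" if "y > e" for y
  proof (cases "1 \<le> y")
    case True
    have "integral {e..1} h + integral {1..y} h = integral {e..y} h"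
      using True e by (intro Henstock_Kurzweil_Integration.integral_combine) (auto intro!: integrable_continuous_interval ch)
    then show ?thesis using True by (simp add: Psi_def oint_def h_def)
  next
    case False
    have "integral {e..y} h + integral {y..1} h = integral {e..1} h"
      using False that e by (intro Henstock_Kurzweil_Integration.integral_combine) (auto intro!: integrable_continuous_interval ch)
    then show ?thesis using False by (simp add: Psi_def oint_def h_def)
  qed
  have "((\<lambda>y. integral {e..y} h) has_real_derivative h x) (at x within {e..x+1})"
    using e by (intro integral_has_real_derivative ch) auto
  moreover have "at x within {e..x+1} = at x"
    using e by (intro at_within_interior) auto
  ultimately have "((\<lambda>y. integral {e..y} h) has_real_derivative h x) (at x)" by simp
  then have "((\<lambda>y. integral {e..y} h - integral {e..1} h) has_real_derivative h x - 0) (at x)"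
    by (intro DERIV_diff DERIV_const)
  then have "((\<lambda>y. integral {e..y} h - integral {e..1} h) has_real_derivative h x) (at x)" by simp
  then have "(Psi m n w has_real_derivative h x) (at x)"
    by (rule has_field_derivative_transform_within_open[where S="{e<..}"]) (use e eq in auto)
  then show ?thesis by (simp add: h_def)
qed

lemma Psi_strict:
  fixes m n :: real and w :: "real \<Rightarrow> real"
  assumes mn: "m > n" and wc: "continuous_on {0..} w" and wp: "\<forall>x>0. w x > 0"
    and ab: "0 < a" "a < b"
  shows "Psi m n w a < Psi m n w b"
proof (rule DERIV_pos_imp_increasing_open[OF ab(2)])
  fix x assume "a < x" "x < b"
  then show "\<exists>y. DERIV (Psi m n w) x :> y \<and> y > 0"
    using Psi_deriv[OF mn wc wp, of x] ab wp by (intro exI[of _ "1 / w (x powr (1 / (m - n)))"]) auto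
next
  show "continuous_on {a..b} (Psi m n w)"
    using ab by (intro continuous_at_imp_continuous_on ballI DERIV_isCont[OF Psi_deriv[OF mn wc wp]]) auto
qed

theorem corollary3:
  fixes m n c \<tau> :: real
    and f g w u \<alpha> :: "real \<Rightarrow> real"
  assumes mn: "m > n" "n > 0" and c: "c > 0"
    and f: "continuous_on {0..} f" "\<forall>t\<ge>0. f t \<ge> 0"
    and g: "continuous_on {0..} g" "\<forall>t\<ge>0. g t \<ge> 0"
    and w: "continuous_on {0..} w" "\<forall>t\<ge>0. w t \<ge> 0"
           "mono_on {0..} w" "\<forall>x>0. w x > 0"
    and \<alpha>: "\<exists>\<alpha>'. (\<forall>t\<ge>0. (\<alpha> has_real_derivative \<alpha>' t) (at t within {0..}))
                     \<and> continuous_on {0..} \<alpha>'"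
           "\<forall>t\<ge>0. \<alpha> t \<ge> 0" "mono_on {0..} \<alpha>" "\<forall>t\<ge>0. \<alpha> t \<le> t"
    and u: "continuous_on {0..} u" "\<forall>t\<ge>0. u t \<ge> 0"
    and ineq: "\<forall>t\<ge>0. u t powr m \<le> c powr (m / (m - n)) + m / (m - n) *
         (integral {0..\<alpha> t} (\<lambda>s. f s * u s powr n * w (u s))
          + integral {0..t} (\<lambda>s. g s * u s powr n * w (u s)))"
    and \<tau>: "\<tau> > 0"
    and dom: "\<forall>t\<in>{0..\<tau>}. Psi m n w c + integral {0..\<alpha> t} f + integral {0..t} g
                \<in> Psi m n w ` {0<..}"
  shows "\<forall>t\<in>{0..\<tau>}. u t \<le>
           (Psi_inv m n w (Psi m n w c + integral {0..\<alpha> t} f + integral {0..t} g))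
             powr (1 / (m - n))"
proof -
  obtain \<alpha>' where ad: "\<forall>t\<ge>0. (\<alpha> has_real_derivative \<alpha>' t) (at t within {0..})"
    using \<alpha>(1) by blast
  have wa: "at x within {0..} = at x" if "x > 0" for x :: real
    using that by (intro at_within_interior) (simp add: interior_Ici)
  define k where "k = m / (m - n)"
  define r where "r = (m - n) / m"
  define C0 where "C0 = c powr (m / (m - n))"
  have kpos: "k > 0" and rpos: "r > 0" and C0pos: "C0 > 0" and rk: "r * k = 1"
    using mn c by (auto simp: k_def r_def C0_def)
  define F where "F = (\<lambda>s. f s * u s powr n * w (u s))"
  define G where "G = (\<lambda>s. g s * u s powr n * w (u s))"
  have cun: "continuous_on {0..} (\<lambda>s. u s powr n)"
    using u mn by (intro continuous_on_powr' continuous_on_const) auto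
  have cwu: "continuous_on {0..} (\<lambda>s. w (u s))"
    by (rule continuous_on_compose2[OF w(1) u(1)]) (use u(2) in auto)
  have Fc: "continuous_on {0..} F"
    unfolding F_def by (intro continuous_on_mult f(1) cun cwu)
  have Gc: "continuous_on {0..} G"
    unfolding G_def by (intro continuous_on_mult g(1) cun cwu)
  have Fnn: "\<forall>s\<ge>0. F s \<ge> 0" using f(2) u(2) w(2) by (auto simp: F_def)
  have Gnn: "\<forall>s\<ge>0. G s \<ge> 0" using g(2) u(2) w(2) by (auto simp: G_def)
  obtain PF where PF: "\<forall>y\<ge>0. PF y = integral {0..y} F" "\<forall>y\<ge>0. (PF has_real_derivative F y) (at y)"
    using anti_exists[OF Fc] by blast
  obtain PG where PG: "\<forall>y\<ge>0. PG y = integral {0..y} G" "\<forall>y\<ge>0. (PG has_real_derivative G y) (at y)"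
    using anti_exists[OF Gc] by blast
  obtain Pf where Pf: "\<forall>y\<ge>0. Pf y = integral {0..y} f" "\<forall>y\<ge>0. (Pf has_real_derivative f y) (at y)"
    using anti_exists[OF f(1)] by blast
  obtain Pg where Pg: "\<forall>y\<ge>0. Pg y = integral {0..y} g" "\<forall>y\<ge>0. (Pg has_real_derivative g y) (at y)"
    using anti_exists[OF g(1)] by blast
  define v where "v = (\<lambda>s. C0 + k * (PF (\<alpha> s) + PG s))"
  have vint: "v s = C0 + k * (integral {0..\<alpha> s} F + integral {0..s} G)" if "s \<ge> 0" for s
    using PF PG \<alpha>(2) that by (simp add: v_def)
  have iF: "integral {0..a} F \<le> integral {0..b} F" if "0 \<le> a" "a \<le> b" for a b
    using that Fnn by (intro integral_subset_le integrable_continuous_interval continuous_on_subset[OF Fc]) auto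
  have iG: "integral {0..a} G \<le> integral {0..b} G" if "0 \<le> a" "a \<le> b" for a b
    using that Gnn by (intro integral_subset_le integrable_continuous_interval continuous_on_subset[OF Gc]) auto
  have vmono: "v a \<le> v b" if "0 \<le> a" "a \<le> b" for a b
  proof -
    have "\<alpha> a \<le> \<alpha> b" using mono_onD[OF \<alpha>(3)] that by auto
    then have "integral {0..\<alpha> a} F \<le> integral {0..\<alpha> b} F" using iF \<alpha>(2) that by auto
    moreover have "integral {0..a} G \<le> integral {0..b} G" using iG that by auto
    moreover have "v b = C0 + k * (integral {0..\<alpha> b} F + integral {0..b} G)" using vint that by simp
    ultimately show ?thesis unfolding vint[OF that(1)] using that kpos
      by (simp add: add_mono mult_left_mono)
  qed
  have vge: "v s \<ge> C0" if "s \<ge> 0" for s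
  proof -
    have "integral {0..\<alpha> s} F \<ge> 0" "integral {0..s} G \<ge> 0"
      using iF[of 0 "\<alpha> s"] iG[of 0 s] \<alpha>(2) that by auto
    then show ?thesis using vint[OF that] kpos by simp
  qed
  have vpos: "v s > 0" if "s \<ge> 0" for s using vge[OF that] C0pos by simp
  have ubound: "u y \<le> v s powr (1/m)" if "0 \<le> y" "y \<le> s" for y s
  proof -
    have "u y powr m \<le> v y" using ineq[rule_format, of y] vint[of y] that by (simp add: k_def C0_def F_def G_def)
    also have "\<dots> \<le> v s" using vmono that by auto
    finally have "(u y powr m) powr (1/m) \<le> v s powr (1/m)"
      using mn by (intro powr_mono2) auto
    moreover have "(u y powr m) powr (1/m) = u y" using u(2) that mn by (simp add: powr_powr)
    ultimately show ?thesis by simp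
  qed
  define z where "z = (\<lambda>s. v s powr r)"
  have zq: "z s powr (1/(m-n)) = v s powr (1/m)" if "s \<ge> 0" for s
    using mn unfolding z_def r_def by (simp add: powr_powr)
  have zpos: "z s > 0" if "s \<ge> 0" for s using vpos[OF that] by (simp add: z_def)
  define H where "H = (\<lambda>s. Psi m n w (z s) - Pf (\<alpha> s) - Pg s)"
  define H' where "H' = (\<lambda>s. 1 / w (z s powr (1/(m-n))) * (r * v s powr (r - 1) * (k * (F (\<alpha> s) * \<alpha>' s + G s)))
      - (f (\<alpha> s) * \<alpha>' s + g s))"
  have Hd: "(H has_real_derivative H' s) (at s within {0..})" if "s \<ge> 0" for s
  proof -
    have as: "\<alpha> s \<ge> 0" using \<alpha>(2) that by auto
    have d1: "((\<lambda>x. PF (\<alpha> x)) has_real_derivative F (\<alpha> s) * \<alpha>' s) (at s within {0..})"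
      by (rule DERIV_chain2[OF PF(2)[rule_format, OF as] ad[rule_format, OF that]])
    have d2: "(PG has_real_derivative G s) (at s within {0..})"
      using PG(2) that by (auto intro: has_field_derivative_at_within)
    have "((\<lambda>x. C0 + k * (PF (\<alpha> x) + PG x)) has_real_derivative 0 + k * (F (\<alpha> s) * \<alpha>' s + G s)) (at s within {0..})"
      by (intro DERIV_add DERIV_const DERIV_cmult d1 d2)
    then have dv: "(v has_real_derivative k * (F (\<alpha> s) * \<alpha>' s + G s)) (at s within {0..})"
      by (simp add: v_def)
    have dz: "(z has_real_derivative r * v s powr (r - 1) * (k * (F (\<alpha> s) * \<alpha>' s + G s))) (at s within {0..})"
      unfolding z_def by (rule DERIV_chain2[OF has_real_derivative_powr[OF vpos[OF that]] dv])
    have dP: "((\<lambda>x. Psi m n w (z x)) has_real_derivative 1 / w (z s powr (1/(m-n))) * (r * v s powr (r - 1) * (k * (F (\<alpha> s) * \<alpha>' s + G s)))) (at s within {0..})"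
      by (rule DERIV_chain2[OF Psi_deriv[OF mn(1) w(1) w(4) zpos[OF that]] dz])
    have df: "((\<lambda>x. Pf (\<alpha> x)) has_real_derivative f (\<alpha> s) * \<alpha>' s) (at s within {0..})"
      by (rule DERIV_chain2[OF Pf(2)[rule_format, OF as] ad[rule_format, OF that]])
    have dg: "(Pg has_real_derivative g s) (at s within {0..})"
      using Pg(2) that by (auto intro: has_field_derivative_at_within)
    show ?thesis unfolding H_def H'_def using DERIV_diff[OF DERIV_diff[OF dP df] dg] by (simp add: diff_diff_eq)
  qed
  have Hneg: "H' s \<le> 0" if "s > 0" for s
  proof -
    have s0: "s \<ge> 0" using that by simp
    have as: "\<alpha> s \<ge> 0" "\<alpha> s \<le> s" using \<alpha>(2,4) s0 by auto
    have "(\<alpha> has_real_derivative \<alpha>' s) (at s)" using ad s0 wa[OF that] by auto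
    then have a': "\<alpha>' s \<ge> 0" by (rule mono_deriv_nonneg[OF \<alpha>(3) that])
    define q where "q = v s powr (1/m)"
    have qpos: "q > 0" using vpos[OF s0] by (simp add: q_def)
    have wq: "w q > 0" using w(4) qpos by auto
    have qn: "q powr n > 0" using qpos by simp
    have vq: "v s powr (r - 1) * q powr n = 1"
    proof -
      have "v s powr (r - 1) * q powr n = v s powr (r - 1 + n / m)"
        unfolding q_def by (simp add: powr_powr powr_add)
      also have "r - 1 + n / m = 0" using mn by (simp add: r_def field_simps)
      finally show ?thesis using vpos[OF s0] by simp
    qed
    define Q where "Q = q powr n * w q"
    have Qpos: "Q > 0" using qn wq by (simp add: Q_def)
    have bd: "p * (u y powr n * w (u y)) \<le> p * Q" if "0 \<le> y" "y \<le> s" "p \<ge> 0" for y p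
    proof -
      have uy: "u y \<le> q" "u y \<ge> 0" using ubound[OF that(1,2)] u(2) that by (auto simp: q_def)
      have "u y powr n \<le> q powr n" using uy mn by (intro powr_mono2) auto
      moreover have "w (u y) \<le> w q" using uy qpos by (intro mono_onD[OF w(3)]) auto
      ultimately have "u y powr n * w (u y) \<le> Q" unfolding Q_def using w(2) uy qpos
        by (intro mult_mono) auto
      then show ?thesis using that(3) by (intro mult_left_mono)
    qed
    have FA: "F (\<alpha> s) \<le> f (\<alpha> s) * Q" using bd[of "\<alpha> s" "f (\<alpha> s)"] as f(2) by (simp add: F_def mult.assoc)
    have GA: "G s \<le> g s * Q" using bd[of s "g s"] s0 g(2) by (simp add: G_def mult.assoc)
    have "v s powr (r - 1) = 1 / q powr n" using vq qn by (simp add: field_simps)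
    then have eqH: "H' s = (r * k) * (F (\<alpha> s) * \<alpha>' s + G s) / Q - (f (\<alpha> s) * \<alpha>' s + g s)"
      unfolding H'_def zq[OF s0] q_def[symmetric] Q_def by (simp add: field_simps)
    have "F (\<alpha> s) * \<alpha>' s + G s \<le> (f (\<alpha> s) * \<alpha>' s + g s) * Q"
      using mult_right_mono[OF FA a'] GA by (simp add: algebra_simps)
    then have "(F (\<alpha> s) * \<alpha>' s + G s) / Q \<le> f (\<alpha> s) * \<alpha>' s + g s"
      using Qpos by (simp add: pos_divide_le_eq)
    then show ?thesis using eqH rk by simp
  qed
  have Hcont: "continuous_on {0..} H"
    using Hd by (auto simp: continuous_on_eq_continuous_within intro: DERIV_continuous)
  have a0: "\<alpha> 0 = 0" using \<alpha>(2,4) by force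
  have H0: "H 0 = Psi m n w c"
  proof -
    have "v 0 = C0" using vint[of 0] a0 by simp
    then have "z 0 = c" using c mn by (simp add: z_def C0_def r_def powr_powr)
    then show ?thesis using Pf Pg a0 by (simp add: H_def)
  qed
  have inj: "inj_on (Psi m n w) {0<..}"
  proof (rule inj_onI)
    fix x y assume "x \<in> {0<..}" "y \<in> {0<..}" "Psi m n w x = Psi m n w y"
    then show "x = y" using Psi_strict[OF mn(1) w(1) w(4), of x y] Psi_strict[OF mn(1) w(1) w(4), of y x]
      by (cases x y rule: linorder_cases) auto
  qed
  show ?thesis
  proof
    fix t assume t: "t \<in> {0..\<tau>}"
    then have t0: "t \<ge> 0" by simp
    have "H t \<le> H 0"
    proof (rule DERIV_nonpos_imp_decreasing_open[OF t0])
      fix x :: real assume x: "0 < x" "x < t"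
      then have "DERIV H x :> H' x" using Hd[of x] wa[of x] by simp
      then show "\<exists>y. DERIV H x :> y \<and> y \<le> 0" using Hneg[of x] x by blast
    next
      show "continuous_on {0..t} H" using Hcont by (rule continuous_on_subset) auto
    qed
    then have le: "Psi m n w (z t) \<le> Psi m n w c + integral {0..\<alpha> t} f + integral {0..t} g"
      using H0 Pf Pg \<alpha>(2) t0 by (simp add: H_def)
    obtain y0 where y0: "y0 > 0" "Psi m n w c + integral {0..\<alpha> t} f + integral {0..t} g = Psi m n w y0"
      using dom t by force
    have zy: "z t \<le> y0"
    proof (rule ccontr)
      assume "\<not> z t \<le> y0"
      then have "Psi m n w y0 < Psi m n w (z t)" using Psi_strict[OF mn(1) w(1) w(4) y0(1)] by simp
      then show False using le y0 by simp
    qed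
    have inv: "Psi_inv m n w (Psi m n w c + integral {0..\<alpha> t} f + integral {0..t} g) = y0"
      unfolding y0(2) Psi_inv_def using inj y0(1) by (simp add: the_inv_into_f_f)
    have "u t \<le> v t powr (1/m)" using ubound[of t t] t0 by simp
    also have "\<dots> = z t powr (1/(m-n))" using zq[OF t0] by simp
    also have "\<dots> \<le> y0 powr (1/(m-n))" using zy zpos[OF t0] mn by (intro powr_mono2) auto
    finally show "u t \<le> (Psi_inv m n w (Psi m n w c + integral {0..\<alpha> t} f + integral {0..t} g)) powr (1 / (m - n))"
      using inv by simp
  qed
qed

end
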